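(* Let $r\in\mathbb{R}$. For all integers $n,m,k\ge 0$ with $n\ge m+k$, \[ \binom{m+k}{m} S_{2,r}(n,m+k) = \sum_{n_1=m}^n \sum_{l=0}^m \sum_{j=0}^k \binom{n_1}{l}\binom{n-n_1}{j}\binom{n}{n_1} r^{l+j} S_2(n_1-l,m-l)\, S_2(n-n_1-j,k-j). \]
   Context: $S_2(n,k)$ denotes the Stirling numbers of the second kind, $\frac{1}{k!}(e^t-1)^k = \sum_{n\ge k} S_2(n,k)\frac{t^n}{n!}$, with $S_2(a,b)=0$ whenever $a<b$, and $\binom{a}{b}=0$ for $b>a$. For $r\in\mathbb{R}$ and integer $k\ge 0$, the extended Stirling numbers of the second kind $S_{2,r}(n,k)$ are defined by $\frac{1}{k!}(e^t-1+rt)^k = \sum_{n=k}^\infty S_{2,r}(n,k)\frac{t^n}{n!}$. *)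

theory Defs
  imports "HOL-Combinatorics.Stirling" "HOL-Computational_Algebra.Formal_Power_Series"
begin

definition ext_Stirling2 :: "real \<Rightarrow> nat \<Rightarrow> nat \<Rightarrow> real" where
  "ext_Stirling2 r n k =
     fact n * fps_nth ((fps_exp 1 - 1 + fps_const r * fps_X) ^ k) n / fact k"

end

theory Submission imports Defs begin

lemma aux_div: "(a::real) * x = c \<Longrightarrow> a \<noteq> 0 \<Longrightarrow> x = c / a"
  by (simp add: field_simps)

lemma E_pow_nth:
  "fps_nth ((fps_exp (1::real) - 1)^k) n = fact k * real (Stirling n k) / fact n"
proof (induction n arbitrary: k)
  case 0
  then show ?case by (cases k) (simp_all add: fps_nth_power_0)
next
  case (Suc n)
  show ?case
  proof (cases k)
    case 0
    then show ?thesis by simp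
  next
    case (Suc k')
    define E where "E = fps_exp (1::real) - 1"
    have d: "fps_deriv (E ^ Suc k') = fps_const (real (Suc k')) * (E ^ Suc k' + E ^ k')"
      unfolding E_def fps_deriv_power
      by (simp add: algebra_simps)
    have "real (Suc n) * fps_nth (E ^ Suc k') (Suc n) = real (Suc k') * (fps_nth (E ^ Suc k') n + fps_nth (E ^ k') n)"
      using arg_cong[OF d, of "\<lambda>f. fps_nth f n"]
      by (simp only: fps_deriv_nth fps_mult_left_const_nth fps_add_nth Suc_eq_plus1)
    also have "\<dots> = real (Suc k') * (fact (Suc k') * real (Stirling n (Suc k')) / fact n
          + fact k' * real (Stirling n k') / fact n)"
      by (simp only: E_def Suc.IH)
    finally have eq: "real (Suc n) * fps_nth (E ^ Suc k') (Suc n) = real (Suc k') * (fact (Suc k') * real (Stirling n (Suc k')) / fact n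
          + fact k' * real (Stirling n k') / fact n)" .
    have "fps_nth (E ^ Suc k') (Suc n) = real (Suc k') * (fact (Suc k') * real (Stirling n (Suc k')) / fact n
          + fact k' * real (Stirling n k') / fact n) / real (Suc n)"
      by (rule aux_div[OF eq]) simp
    also have "\<dots> = fact (Suc k') * real (Stirling (Suc n) (Suc k')) / fact (Suc n)"
      by (simp add: field_simps)
    finally have "fps_nth (E ^ Suc k') (Suc n) = fact (Suc k') * real (Stirling (Suc n) (Suc k')) / fact (Suc n)" .
    then show ?thesis by (simp only: E_def \<open>k = Suc k'\<close>)
  qed
qed

lemma F_pow_nth:
  "fact n1 * fps_nth ((fps_exp (1::real) - 1 + fps_const r * fps_X)^m) n1 / fact m =
     (\<Sum>l=0..m. real (n1 choose l) * r^l * real (Stirling (n1-l) (m-l)))"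
proof -
  define E where "E = fps_exp (1::real) - 1"
  have Epn: "\<And>k n. fps_nth (E^k) n = fact k * real (Stirling n k) / fact n"
    unfolding E_def by (rule E_pow_nth)
  have b: "(E + fps_const r * fps_X)^m =
      (\<Sum>l=0..m. fps_const (real (m choose l) * r^l) * (fps_X^l * E^(m-l)))"
  proof -
    have "(E + fps_const r * fps_X)^m = (fps_const r * fps_X + E)^m" by (simp only: add.commute)
    also have "\<dots> = (\<Sum>l\<le>m. of_nat (m choose l) * (fps_const r * fps_X)^l * E^(m-l))"
      by (rule binomial_ring)
    also have "\<dots> = (\<Sum>l=0..m. fps_const (real (m choose l) * r^l) * (fps_X^l * E^(m-l)))"
      unfolding atMost_atLeast0
    proof (rule sum.cong[OF refl])
      fix l
      have 1: "(of_nat (m choose l) :: real fps) = fps_const (real (m choose l))"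
        by (simp add: fps_of_nat)
      show "of_nat (m choose l) * (fps_const r * fps_X)^l * E^(m-l) =
          fps_const (real (m choose l) * r^l) * (fps_X^l * E^(m-l))"
        unfolding 1 by (simp add: power_mult_distrib mult_ac)
    qed
    finally show ?thesis .
  qed
  have "fact n1 * fps_nth ((E + fps_const r * fps_X)^m) n1 / fact m =
      (\<Sum>l=0..m. fact n1 / fact m * (real (m choose l) * r^l *
          (if n1 < l then 0 else fact (m-l) * real (Stirling (n1-l) (m-l)) / fact (n1-l))))"
    unfolding b fps_sum_nth
    by (simp add: fps_X_power_mult_nth Epn sum_distrib_left sum_divide_distrib cong: if_cong)
  also have "\<dots> = (\<Sum>l=0..m. real (n1 choose l) * r^l * real (Stirling (n1-l) (m-l)))"
  proof (rule sum.cong[OF refl])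
    fix l assume l: "l \<in> {0..m}"
    show "fact n1 / fact m * (real (m choose l) * r^l *
          (if n1 < l then 0 else fact (m-l) * real (Stirling (n1-l) (m-l)) / fact (n1-l))) =
          real (n1 choose l) * r^l * real (Stirling (n1-l) (m-l))"
    proof (cases "n1 < l")
      case True then show ?thesis by simp
    next
      case False
      then have "l \<le> n1" "l \<le> m" using l by auto
      then show ?thesis
        by (simp add: binomial_fact field_simps)
    qed
  qed
  finally show ?thesis unfolding E_def .
qed

lemma F_pow_low:
  assumes "n1 < m"
  shows "(\<Sum>l=0..m. real (n1 choose l) * r^l * real (Stirling (n1-l) (m-l))) = 0"
proof (rule sum.neutral, rule ballI)
  fix l assume "l \<in> {0..m}"
  show "real (n1 choose l) * r^l * real (Stirling (n1-l) (m-l)) = 0"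
  proof (cases "l \<le> n1")
    case True then show ?thesis using assms by simp
  next
    case False then show ?thesis by simp
  qed
qed

theorem mainTheorem6:
  fixes r :: real and n m k :: nat
  assumes "n \<ge> m + k"
  shows "real ((m + k) choose m) * ext_Stirling2 r n (m + k) =
    (\<Sum>n1 = m..n. \<Sum>l = 0..m. \<Sum>j = 0..k.
       real (n1 choose l) * real ((n - n1) choose j) * real (n choose n1) * r ^ (l + j)
       * real (Stirling (n1 - l) (m - l)) * real (Stirling (n - n1 - j) (k - j)))"
proof -
  define F where "F = fps_exp (1::real) - 1 + fps_const r * fps_X"
  define A where "A = (\<lambda>n1. \<Sum>l=0..m. real (n1 choose l) * r^l * real (Stirling (n1-l) (m-l)))"
  define B where "B = (\<lambda>n2. \<Sum>j=0..k. real (n2 choose j) * r^j * real (Stirling (n2-j) (k-j)))"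
  have cm: "real ((m + k) choose m) = fact (m+k) / (fact m * fact k)"
    using binomial_fact[of m "m+k", where 'a=real] by simp
  have "real ((m + k) choose m) * ext_Stirling2 r n (m + k) =
      fact n * fps_nth (F^m * F^k) n / (fact m * fact k)"
    unfolding ext_Stirling2_def cm F_def by (simp add: power_add)
  also have "\<dots> = (\<Sum>n1=0..n. real (n choose n1) *
       (fact n1 * fps_nth (F^m) n1 / fact m) * (fact (n-n1) * fps_nth (F^k) (n-n1) / fact k))"
    unfolding fps_mult_nth sum_distrib_left sum_divide_distrib
    by (rule sum.cong[OF refl]) (simp add: binomial_fact field_simps)
  also have "\<dots> = (\<Sum>n1=0..n. real (n choose n1) * A n1 * B (n-n1))"
    unfolding A_def B_def F_def F_pow_nth ..
  also have "\<dots> = (\<Sum>n1=m..n. real (n choose n1) * A n1 * B (n-n1))"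
  proof -
    have "{0..n} = {0..<m} \<union> {m..n}" using assms by auto
    have "(\<Sum>n1=0..n. real (n choose n1) * A n1 * B (n-n1)) =
        (\<Sum>n1=0..<m. real (n choose n1) * A n1 * B (n-n1)) +
        (\<Sum>n1=m..n. real (n choose n1) * A n1 * B (n-n1))"
      unfolding \<open>{0..n} = {0..<m} \<union> {m..n}\<close> by (rule sum.union_disjoint) auto
    moreover have "(\<Sum>n1=0..<m. real (n choose n1) * A n1 * B (n-n1)) = 0"
      by (rule sum.neutral) (simp add: A_def F_pow_low)
    ultimately show ?thesis by simp
  qed
  also have "\<dots> = (\<Sum>n1 = m..n. \<Sum>l = 0..m. \<Sum>j = 0..k.
       real (n1 choose l) * real ((n - n1) choose j) * real (n choose n1) * r ^ (l + j)
       * real (Stirling (n1 - l) (m - l)) * real (Stirling (n - n1 - j) (k - j)))"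
    unfolding A_def B_def sum_distrib_left sum_distrib_right
    by (rule sum.cong[OF refl], subst sum.swap, rule sum.cong[OF refl], rule sum.cong[OF refl])
       (simp add: power_add mult_ac)
  finally show ?thesis .
qed

end
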